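(* For each $p\in(0,1]$, $\mathrm{Dim}_{\mathrm H}(\Pi_p)=(d+\log_2p)^+$ almost surely.
   Context: For integers $k\ge 0$ let $\mathcal{V}_k:=[-2^k,2^k)^d\subset\mathbf{R}^d$, $\mathcal{S}_0:=\mathcal{V}_0$ and $\mathcal{S}_{k+1}:=\mathcal{V}_{k+1}\setminus\mathcal{V}_k$. For $n\in\mathbf{Z}$, $\mathcal{D}_n$ denotes the set of dyadic cubes $\prod_{i=1}^d[j_i2^n,(j_i+1)2^n)$ with $(j_1,\dots,j_d)\in\mathbf{Z}^d$. For $A\subseteq\mathbf{R}^d$, $\alpha>0$ and $k\ge0$, let $\mathcal{N}_\alpha(A,\mathcal{S}_k):=\min\sum_{i=1}^m2^{\alpha(\ell_i-k-1)}$, the minimum over all finite covers of $A\cap\mathcal{S}_k$ by cubes $Q_1,\dots,Q_m$ with $Q_i\in\mathcal{D}_{\ell_i}$, $\ell_i\ge0$. The macroscopic Hausdorff dimension is $\mathrm{Dim}_{\mathrm H}(A):=\inf\{\alpha>0:\sum_{k=1}^\infty\mathcal{N}_\alpha(A,\mathcal{S}_k)<\infty\}$. Macroscopic fractal percolation: on a probability space $(\Omega,\mathcal{F},\mathbb{P})$, for each integer $k\ge0$ let $\{U_k(Q)\}$ be i.i.d. Uniform$(0,1)$ random variables indexed by the dyadic cubes $Q\subseteq\mathcal{V}_k$ with $Q\in\mathcal{D}_j$ for some $0\le j\le k$, the families for different $k$ being independent. For $x\in\mathcal{V}_k\cap\mathbf{Z}^d$ and $1\le i\le k+1$ let $Q^{(k)}_i(x)$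 be the unique cube of $\mathcal{D}_{k+1-i}$ containing $x$. For $p\in(0,1]$, $\Pi_p\subseteq\mathbf{R}^d$ is the union, over all $k\ge0$ and all $x\in\mathbf{Z}^d\cap\mathcal{S}_k$ such that $U_k(Q^{(k)}_i(x))<p$ for every $i=1,\dots,k+1$, of the unit cubes $[x_1,x_1+1)\times\cdots\times[x_d,x_d+1)$. $x^+:=\max(x,0)$. *)

theory Defs
  imports "HOL-Probability.Probability"
begin

text \<open>Points of R^d are vectors real^'n with d = CARD('n).\<close>

definition Vk :: "nat \<Rightarrow> (real^'n::finite) set" where
  "Vk k = {x. \<forall>i. - (2 ^ k) \<le> x $ i \<and> x $ i < 2 ^ k}"

definition Sk :: "nat \<Rightarrow> (real^'n::finite) set" where
  "Sk k = (if k = 0 then Vk 0 else Vk k - Vk (k - 1))"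

definition dcube :: "nat \<Rightarrow> ('n::finite \<Rightarrow> int) \<Rightarrow> (real^'n) set" where
  "dcube l j = {x. \<forall>i. real_of_int (j i) * 2 ^ l \<le> x $ i \<and> x $ i < (real_of_int (j i) + 1) * 2 ^ l}"

definition Nalpha :: "real \<Rightarrow> (real^'n::finite) set \<Rightarrow> nat \<Rightarrow> real" where
  "Nalpha \<alpha> A k = Inf {(\<Sum>(l, j)\<in>C. 2 powr (\<alpha> * (real l - real k - 1))) | C.
      finite C \<and> A \<inter> Sk k \<subseteq> (\<Union>(l, j)\<in>C. dcube l j)}"

definition DimH :: "(real^'n::finite) set \<Rightarrow> real" where
  "DimH A = Inf {\<alpha>. \<alpha> > 0 \<and> summable (\<lambda>k. Nalpha \<alpha> A (Suc k))}"

text \<open>Index set of the uniform variables: (k, l, j) with the cube dcube l j of level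
  l \<le> k contained in V_k.\<close>
definition perc_index :: "(nat \<times> nat \<times> ('n::finite \<Rightarrow> int)) set" where
  "perc_index = {(k, l, j). l \<le> k \<and> dcube l j \<subseteq> (Vk k :: (real^'n) set)}"

definition Pi_perc :: "(nat \<times> nat \<times> ('n::finite \<Rightarrow> int) \<Rightarrow> 'a \<Rightarrow> real) \<Rightarrow> real \<Rightarrow> 'a \<Rightarrow> (real^'n) set" where
  "Pi_perc U p \<omega> = \<Union> {dcube 0 z | z k. (\<chi> m. real_of_int (z m)) \<in> Sk k \<and>
      (\<forall>l\<le>k. U (k, l, \<lambda>m. \<lfloor>real_of_int (z m) / 2 ^ l\<rfloor>) \<omega> < p)}"

end

theory Submission
  imports Defs
begin

definition anc :: "nat \<Rightarrow> ('n::finite \<Rightarrow> int) \<Rightarrow> ('n \<Rightarrow> int)" where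
  "anc l z = (\<lambda>m. z m div 2^l)"

definition ivec :: "('n::finite \<Rightarrow> int) \<Rightarrow> real^'n" where
  "ivec z = (\<chi> m. real_of_int (z m))"

lemma floor_div_pow: "\<lfloor>real_of_int a / 2 ^ l\<rfloor> = a div 2 ^ l"
proof -
  have "(2::real) ^ l = real_of_int (2 ^ l)" by simp
  then show ?thesis by (simp only: floor_divide_of_int_eq)
qed

lemma Pi_perc_alt: "Pi_perc U p \<omega> = \<Union> {dcube 0 z | z k. ivec z \<in> Sk k \<and>
      (\<forall>l\<le>k. U (k, l, anc l z) \<omega> < p)}"
  unfolding Pi_perc_def ivec_def anc_def floor_div_pow by simp

lemma int_in_cube_iff: "(real_of_int j * 2 ^ l \<le> real_of_int a \<and> real_of_int a < (real_of_int j + 1) * 2 ^ l) \<longleftrightarrow> j = a div 2 ^ l"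
proof -
  have "j = a div 2^l \<longleftrightarrow> j = \<lfloor>real_of_int a / 2 ^ l\<rfloor>" by (simp add: floor_div_pow)
  also have "\<dots> \<longleftrightarrow> real_of_int j \<le> real_of_int a / 2 ^ l \<and> real_of_int a / 2 ^ l < real_of_int j + 1"
    by (metis floor_eq_iff)
  also have "\<dots> \<longleftrightarrow> (real_of_int j * 2 ^ l \<le> real_of_int a \<and> real_of_int a < (real_of_int j + 1) * 2 ^ l)"
    by (simp add: pos_le_divide_eq pos_divide_less_eq)
  finally show ?thesis by simp
qed

lemma ivec_in_dcube: "ivec z \<in> dcube l j \<longleftrightarrow> j = anc l z"
  unfolding dcube_def ivec_def anc_def using int_in_cube_iff by (auto simp: fun_eq_iff)

lemma ivec_in_Vk: "ivec z \<in> Vk k \<longleftrightarrow> (\<forall>i. - (2^k) \<le> z i \<and> z i < 2^k)"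
proof -
  have "\<And>a::int. (- (2 ^ k) \<le> real_of_int a) = (- (2^k) \<le> a)"
    by (metis of_int_le_iff of_int_minus of_int_numeral of_int_power)
  moreover have "\<And>a::int. (real_of_int a < 2 ^ k) = (a < 2^k)"
    by (metis of_int_less_iff of_int_numeral of_int_power)
  ultimately show ?thesis unfolding Vk_def ivec_def by simp
qed

lemma dcube0_Vk: assumes "x \<in> dcube 0 z" shows "x \<in> Vk k \<longleftrightarrow> ivec z \<in> Vk k"
proof -
  have z: "\<And>i. z i = \<lfloor>x $ i\<rfloor>" using assms unfolding dcube_def
    by (intro floor_unique[symmetric]) auto
  have a: "\<And>i. (- (2 ^ k) \<le> x $ i) = (- (2^k) \<le> z i)"
  proof -
    fix i have "(- (2 ^ k) \<le> x $ i) = (of_int (- (2^k)) \<le> x $ i)" by simp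
    also have "\<dots> = (- (2^k) \<le> z i)" unfolding z by (rule le_floor_iff[symmetric])
    finally show "(- (2 ^ k) \<le> x $ i) = (- (2^k) \<le> z i)" .
  qed
  have b: "\<And>i. (x $ i < 2 ^ k) = (z i < 2^k)"
  proof -
    fix i have "(x $ i < 2 ^ k) = (x $ i < of_int (2^k))" by simp
    also have "\<dots> = (z i < 2^k)" unfolding z by (rule floor_less_iff[symmetric])
    finally show "(x $ i < 2 ^ k) = (z i < 2^k)" .
  qed
  show ?thesis unfolding ivec_in_Vk by (simp add: Vk_def a b)
qed

lemma dcube0_Sk: assumes "x \<in> dcube 0 z" shows "x \<in> Sk k \<longleftrightarrow> ivec z \<in> Sk k"
  using dcube0_Vk[OF assms] unfolding Sk_def by auto

lemma Vk_mono: "k \<le> k' \<Longrightarrow> Vk k \<subseteq> Vk k'"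
proof
  fix x :: "real^'n" assume "k \<le> k'" "x \<in> Vk k"
  have "(2::real)^k \<le> 2^k'" using \<open>k \<le> k'\<close> by simp
  then show "x \<in> Vk k'" using \<open>x \<in> Vk k\<close> unfolding Vk_def
    by (auto intro: order_trans[of _ "- (2^k)"] less_le_trans)
qed

lemma Sk_sub_Vk: "Sk k \<subseteq> Vk k" unfolding Sk_def by auto

lemma Sk_disj: assumes "x \<in> Sk k" "x \<in> Sk k'" shows "k = k'"
proof (rule ccontr)
  assume "k \<noteq> k'"
  { fix a b assume ab: "a < b" "x \<in> Sk a" "x \<in> Sk b"
    have "a \<le> b - 1" using ab(1) by simp
    then have "x \<in> Vk (b - 1)" using ab(2) Sk_sub_Vk[of a] Vk_mono[of a "b - 1"] by blast
    moreover have "x \<notin> Vk (b - 1)" using ab unfolding Sk_def by auto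
    ultimately have False by simp }
  then show False using assms \<open>k \<noteq> k'\<close> by (metis linorder_neqE_nat)
qed

lemma int_div_iff: "(j::int) = a div 2^l \<longleftrightarrow> j*2^l \<le> a \<and> a < (j+1)*2^l"
proof -
  have "(real_of_int j * 2 ^ l \<le> real_of_int a) = (real_of_int (j*2^l) \<le> real_of_int a)" by simp
  then have 1: "(real_of_int j * 2 ^ l \<le> real_of_int a) = (j*2^l \<le> a)" by (simp only: of_int_le_iff)
  have "(real_of_int a < (real_of_int j + 1) * 2 ^ l) = (real_of_int a < real_of_int ((j+1)*2^l))" by simp
  then have 2: "(real_of_int a < (real_of_int j + 1) * 2 ^ l) = (a < (j+1)*2^l)" by (simp only: of_int_less_iff)
  show ?thesis using int_in_cube_iff[of j l a] 1 2 by simp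
qed

lemma anc_add: "anc (a + b) z = anc b (anc a z)"
  unfolding anc_def by (simp add: power_add zdiv_zmult2_eq)

lemma anc_mono_eq: assumes "anc l x = anc l y" "l \<le> l'" shows "anc l' x = anc l' y"
proof -
  have "l' = l + (l' - l)" using assms by simp
  then show ?thesis using assms by (metis anc_add)
qed

lemma level_set_eq: "{z::'n::finite\<Rightarrow>int. anc h z = a} = Pi UNIV (\<lambda>i. {a i * 2^h ..< (a i + 1) * 2^h})"
proof -
  have *: "\<And>(t::int) c. (t div 2^h = c) \<longleftrightarrow> c * 2^h \<le> t \<and> t < (c+1)*2^h"
    using int_div_iff by metis
  show ?thesis unfolding anc_def fun_eq_iff Pi_iff by (auto simp: *)
qed

lemma level_set_finite: "finite {z::'n::finite\<Rightarrow>int. anc h z = a}"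
  unfolding level_set_eq PiE_UNIV_domain[symmetric] by (rule finite_PiE) auto

lemma level_set_card: "card {z::'n::finite\<Rightarrow>int. anc h z = a} = (2^h)^CARD('n)"
proof -
  have "card {z::'n::finite\<Rightarrow>int. anc h z = a} = (\<Prod>i\<in>UNIV. card {a i * 2^h ..< (a i + 1) * 2^h})"
    unfolding level_set_eq PiE_UNIV_domain[symmetric] by (rule card_PiE) auto
  also have "\<dots> = (\<Prod>i\<in>(UNIV::'n set). 2^h)"
  proof (intro prod.cong refl)
    fix i
    have "(a i + 1) * 2^h - a i * 2^h = (2::int)^h" by (simp add: algebra_simps)
    then show "card {a i * 2^h ..< (a i + 1) * 2^h} = 2^h" by (simp add: nat_power_eq)
  qed
  finally show ?thesis by simp
qed

definition ibox :: "nat \<Rightarrow> ('n::finite \<Rightarrow> int) set" where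
  "ibox k = {z. \<forall>i. - (2^k) \<le> z i \<and> z i < 2^k}"

lemma box_eq: "ibox k = Pi UNIV (\<lambda>i. {- (2^k) ..< 2^k})"
  unfolding ibox_def by auto

lemma box_finite: "finite (ibox k)"
  unfolding box_eq PiE_UNIV_domain[symmetric] by (rule finite_PiE) auto

lemma box_card: "card (ibox k :: ('n::finite \<Rightarrow> int) set) = (2^(k+1))^CARD('n)"
proof -
  have "card (ibox k :: ('n::finite \<Rightarrow> int) set) = (\<Prod>i\<in>(UNIV::'n set). card {- (2^k) ..< (2::int)^k})"
    unfolding box_eq PiE_UNIV_domain[symmetric] by (rule card_PiE) auto
  also have "\<dots> = (\<Prod>i\<in>(UNIV::'n set). 2^(k+1))"
    by (intro prod.cong refl) (simp add: nat_mult_distrib nat_power_eq)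
  finally show ?thesis by simp
qed

lemma box_iff: "z \<in> ibox k \<longleftrightarrow> ivec z \<in> Vk k"
  unfolding ibox_def ivec_in_Vk by simp

lemma anc_bounds:
  fixes a :: int
  assumes "- (2^k) \<le> a" "a < 2^k" "l \<le> k"
  shows "- (2^k) \<le> (a div 2^l) * 2^l" "(a div 2^l + 1) * 2^l \<le> 2^k"
proof -
  define j where "j = a div 2^l"
  define b :: int where "b = 2^l"
  define K :: int where "K = 2^(k-l)"
  have bpos: "b > 0" unfolding b_def by simp
  have kb: "(2::int)^k = K * b" unfolding K_def b_def using assms(3) by (simp add: power_add[symmetric])
  have j: "j*b \<le> a" "a < (j+1)*b" using int_div_iff[of j a l] unfolding j_def b_def by auto
  have "- K * b < (j+1) * b" using assms(1) j(2) kb by simp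
  then have "- K < j + 1" using bpos mult_less_cancel_right_pos[of b "- K" "j+1"] by simp
  then have "- K \<le> j" by simp
  then have "- K * b \<le> j * b" using bpos mult_right_mono[of "- K" j b] by simp
  then show "- (2^k) \<le> (a div 2^l) * 2^l" using kb unfolding j_def b_def by simp
  have "j * b < K * b" using j(1) assms(2) kb by simp
  then have "j < K" using bpos mult_less_cancel_right_pos[of b j K] by simp
  then have "(j+1) * b \<le> K * b" using bpos mult_right_mono[of "j+1" K b] by simp
  then show "(a div 2^l + 1) * 2^l \<le> 2^k" using kb unfolding j_def b_def by simp
qed

lemma index_in_perc: assumes "ivec z \<in> Vk k" "l \<le> k"
  shows "(k, l, anc l z) \<in> (perc_index :: (nat \<times> nat \<times> ('n::finite \<Rightarrow> int)) set)"
proof -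
  have zb: "\<And>i. - (2^k) \<le> z i \<and> z i < 2^k" using assms(1) ivec_in_Vk by auto
  have "dcube l (anc l z) \<subseteq> Vk k"
  proof
    fix x :: "real^'n" assume x: "x \<in> dcube l (anc l z)"
    show "x \<in> Vk k" unfolding Vk_def
    proof (safe)
      fix i
      have b1: "- (2^k) \<le> (z i div 2^l) * 2^l" "(z i div 2^l + 1) * 2^l \<le> 2^k"
        using anc_bounds[of k "z i" l] zb assms(2) by auto
      have "real_of_int (- (2^k)) \<le> real_of_int ((z i div 2^l) * 2^l)"
        using b1(1) by (subst of_int_le_iff)
      then have r1: "- (2^k) \<le> real_of_int (z i div 2^l) * 2^l" by simp
      have "real_of_int ((z i div 2^l + 1) * 2^l) \<le> real_of_int (2^k)"
        using b1(2) by (subst of_int_le_iff)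
      then have r2: "(real_of_int (z i div 2^l) + 1) * 2^l \<le> 2^k" by simp
      have xi: "real_of_int (z i div 2^l) * 2^l \<le> x $ i" "x $ i < (real_of_int (z i div 2^l) + 1) * 2^l"
        using x unfolding dcube_def anc_def by auto
      show "- (2^k) \<le> x $ i" using r1 xi by linarith
      show "x $ i < 2^k" using r2 xi by linarith
    qed
  qed
  then show ?thesis unfolding perc_index_def using assms(2) by auto
qed

definition Dk :: "nat \<Rightarrow> ('n::finite \<Rightarrow> int) \<Rightarrow> ('n \<Rightarrow> int) \<Rightarrow> nat" where
  "Dk k x y = card {l \<in> {..k}. anc l x \<noteq> anc l y}"

lemma Dk_le: assumes "anc l x = anc l y" shows "Dk k x y \<le> l"
proof -
  have "{l' \<in> {..k}. anc l' x \<noteq> anc l' y} \<subseteq> {..<l}"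
    using anc_mono_eq[OF assms] by (auto simp: not_less[symmetric])
  then have "Dk k x y \<le> card {..<l}" unfolding Dk_def by (intro card_mono) auto
  then show ?thesis by simp
qed

lemma Dk_eq: assumes "anc n x = anc n y" "n \<le> k"
  shows "anc (Dk k x y) x = anc (Dk k x y) y"
proof (rule ccontr)
  define h where "h = Dk k x y"
  assume ne: "anc (Dk k x y) x \<noteq> anc (Dk k x y) y"
  have hn: "h \<le> n" using Dk_le[OF assms(1)] unfolding h_def .
  have "{..h} \<subseteq> {l \<in> {..k}. anc l x \<noteq> anc l y}"
  proof
    fix l assume "l \<in> {..h}"
    then have "l \<le> h" by simp
    then have "anc l x \<noteq> anc l y" using anc_mono_eq[of l x y h] ne unfolding h_def by blast
    then show "l \<in> {l \<in> {..k}. anc l x \<noteq> anc l y}" using \<open>l \<le> h\<close> hn assms(2) by simp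
  qed
  then have "card {..h} \<le> h" unfolding h_def Dk_def by (intro card_mono) auto
  then show False by simp
qed

definition Ix :: "nat \<Rightarrow> ('n::finite \<Rightarrow> int) \<Rightarrow> (nat \<times> nat \<times> ('n \<Rightarrow> int)) set" where
  "Ix k z = (\<lambda>l. (k, l, anc l z)) ` {..k}"

lemma Ix_finite: "finite (Ix k z)" unfolding Ix_def by simp

lemma Ix_card: "card (Ix k z) = k + 1"
  unfolding Ix_def by (subst card_image) (auto simp: inj_on_def)

lemma Ix_Un_card: "card (Ix k x \<union> Ix k y) = k + 1 + Dk k x y"
proof -
  define B where "B = (\<lambda>l. (k, l, anc l y)) ` {l \<in> {..k}. anc l x \<noteq> anc l y}"
  have eq: "Ix k x \<union> Ix k y = Ix k x \<union> B" unfolding Ix_def B_def by (force simp: image_iff)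
  have disj: "Ix k x \<inter> B = {}" unfolding Ix_def B_def by auto
  have cB: "card B = Dk k x y" unfolding B_def Dk_def by (subst card_image) (auto simp: inj_on_def)
  have "card (Ix k x \<union> B) = card (Ix k x) + card B"
    by (intro card_Un_disjoint Ix_finite disj) (simp add: B_def)
  then show ?thesis using eq cB Ix_card by simp
qed

lemma Ix_sub_perc: "ivec z \<in> Vk k \<Longrightarrow> Ix k z \<subseteq> perc_index"
  unfolding Ix_def using index_in_perc by auto

lemma Nalpha_cover_nonempty:
  "{(\<Sum>(l, j)\<in>C. 2 powr (\<alpha> * (real l - real k - 1))) | C.
      finite C \<and> (A::(real^'n::finite) set) \<inter> Sk k \<subseteq> (\<Union>(l, j)\<in>C. dcube l j)} \<noteq> {}"
proof -
  have "A \<inter> Sk k \<subseteq> (\<Union>(l, j)\<in>((\<lambda>z. (0::nat,z)) ` ibox k). dcube l j)"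
  proof
    fix x assume "x \<in> A \<inter> Sk k"
    then have xV: "x \<in> Vk k" using Sk_sub_Vk by auto
    define z where "z = (\<lambda>i. \<lfloor>x $ i\<rfloor>)"
    have xz: "x \<in> dcube 0 z" unfolding dcube_def z_def by simp
    have "z \<in> ibox k" using dcube0_Vk[OF xz] xV box_iff by auto
    then show "x \<in> (\<Union>(l, j)\<in>((\<lambda>z. (0::nat,z)) ` ibox k). dcube l j)" using xz by auto
  qed
  moreover have "finite ((\<lambda>z. (0::nat,z)) ` ibox k)" by (intro finite_imageI box_finite)
  ultimately show ?thesis by blast
qed

lemma Nalpha_bdd: "bdd_below {(\<Sum>(l, j)\<in>C. 2 powr (\<alpha> * (real l - real k - 1))) | C.
      finite C \<and> (A::(real^'n::finite) set) \<inter> Sk k \<subseteq> (\<Union>(l, j)\<in>C. dcube l j)}"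
  by (rule bdd_belowI[of _ 0]) (auto intro!: sum_nonneg)

lemma Nalpha_le:
  assumes "finite C" "A \<inter> Sk k \<subseteq> (\<Union>(l, j)\<in>C. dcube l j)"
  shows "Nalpha \<alpha> A k \<le> (\<Sum>(l, j)\<in>C. 2 powr (\<alpha> * (real l - real k - 1)))"
  unfolding Nalpha_def by (rule cInf_lower[OF _ Nalpha_bdd]) (use assms in blast)

lemma Nalpha_ge:
  assumes "\<And>C. finite C \<Longrightarrow> A \<inter> Sk k \<subseteq> (\<Union>(l, j)\<in>C. dcube l j) \<Longrightarrow>
     B \<le> (\<Sum>(l, j)\<in>C. 2 powr (\<alpha> * (real l - real k - 1)))"
  shows "B \<le> Nalpha \<alpha> (A::(real^'n::finite) set) k"
  unfolding Nalpha_def by (rule cInf_greatest[OF Nalpha_cover_nonempty]) (use assms in blast)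

lemma Nalpha_nonneg: "0 \<le> Nalpha \<alpha> (A::(real^'n::finite) set) k"
  by (rule Nalpha_ge) (auto intro!: sum_nonneg)

lemma amgm: assumes "t > 0" "w > 0" shows "(a::real) \<le> t * w + a^2 / (4 * t * w)"
proof -
  have "0 \<le> (a - 2*t*w)^2" by simp
  then have "4*t*w*a \<le> (t*w)*(4*t*w) + a^2" by (simp add: power2_eq_square algebra_simps)
  then have "a * (4*t*w) \<le> (t*w + a^2/(4*t*w)) * (4*t*w)" using assms by (simp add: algebra_simps)
  then show ?thesis using assms by (simp add: mult_le_cancel_right)
qed

lemma cover_bound:
  fixes R :: "('n::finite\<Rightarrow>int) set" and C :: "(nat \<times> ('n\<Rightarrow>int)) set"
  assumes R: "finite R" and Cf: "finite C" and q: "q > 0" and t: "t > 0"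
   and cov: "\<And>x. x\<in>R \<Longrightarrow> \<exists>l j. (l,j)\<in>C \<and> j = anc l x"
   and lev: "\<And>l j. (l,j)\<in>C \<Longrightarrow> l \<le> k+1"
  shows "real (card R) \<le> t * (\<Sum>(l,j)\<in>C. 2 powr (q*(real l - real k - 1)))
     + (1/(4*t)) * (\<Sum>x\<in>R. \<Sum>y\<in>R. (2 powr q)^(k+1 - Dk k x y))"
proof -
  define w where "w = (\<lambda>c::nat \<times> ('n\<Rightarrow>int). 2 powr (q*(real (fst c) - real k - 1)))"
  define s where "s = 2 powr q"
  define g where "g = (\<lambda>x y::'n\<Rightarrow>int. s^(k+1 - Dk k x y))"
  have s1: "s \<ge> 1" unfolding s_def using q by (intro ge_one_powr_ge_zero) auto
  have wpos: "\<And>c. w c > 0" unfolding w_def by simp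
  obtain f where f: "\<And>x. x \<in> R \<Longrightarrow> f x \<in> C \<and> snd (f x) = anc (fst (f x)) x"
  proof -
    have "\<forall>x\<in>R. \<exists>c. c \<in> C \<and> snd c = anc (fst c) x" using cov by fastforce
    then show ?thesis using that by metis
  qed
  define Rc where "Rc = (\<lambda>c. {x\<in>R. f x = c})"
  have fR: "f ` R \<subseteq> C" using f by auto
  have cardR: "real (card R) = (\<Sum>c\<in>f`R. real (card (Rc c)))"
  proof -
    have "real (card R) = (\<Sum>x\<in>R. 1)" by simp
    also have "\<dots> = (\<Sum>c\<in>f`R. \<Sum>x\<in>Rc c. 1)" unfolding Rc_def by (rule sum.image_gen[OF R])
    finally show ?thesis by simp
  qed
  have inv: "\<And>c. c \<in> C \<Longrightarrow> 1 / w c = s^(k+1 - fst c)"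
  proof -
    fix c assume "c \<in> C"
    then have lk: "fst c \<le> k+1" using lev by (cases c) auto
    have "1 / w c = 2 powr (q * (real (k+1 - fst c)))"
      unfolding w_def using lk by (simp add: powr_minus_divide[symmetric] algebra_simps of_nat_diff)
    also have "\<dots> = s^(k+1 - fst c)" unfolding s_def by (simp add: powr_powr[symmetric] powr_realpow)
    finally show "1 / w c = s^(k+1 - fst c)" .
  qed
  have local: "real (card (Rc c)) \<le> t * w c + (1/(4*t)) * (\<Sum>x\<in>Rc c. \<Sum>y\<in>R. g x y)"
    if c: "c \<in> f ` R" for c
  proof -
    have cC: "c \<in> C" using c fR by auto
    have RcR: "Rc c \<subseteq> R" unfolding Rc_def by auto
    have Rcf: "finite (Rc c)" using RcR R finite_subset by auto
    have "real (card (Rc c))^2 / w c = (\<Sum>x\<in>Rc c. \<Sum>y\<in>Rc c. 1 / w c)"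
      by (simp add: power2_eq_square)
    also have "\<dots> \<le> (\<Sum>x\<in>Rc c. \<Sum>y\<in>Rc c. g x y)"
    proof (intro sum_mono)
      fix x y assume xy: "x \<in> Rc c" "y \<in> Rc c"
      have "x \<in> R" "f x = c" "y \<in> R" "f y = c" using xy unfolding Rc_def by auto
      then have "anc (fst c) x = anc (fst c) y" using f[of x] f[of y] by metis
      then have D: "Dk k x y \<le> fst c" by (rule Dk_le)
      have "1 / w c = s^(k+1 - fst c)" using inv cC .
      also have "\<dots> \<le> s^(k+1 - Dk k x y)" using s1 D by (intro power_increasing) auto
      finally show "1 / w c \<le> g x y" unfolding g_def .
    qed
    also have "\<dots> \<le> (\<Sum>x\<in>Rc c. \<Sum>y\<in>R. g x y)"
      using RcR R s1 by (intro sum_mono sum_mono2) (auto simp: g_def)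
    finally have A: "real (card (Rc c))^2 / w c \<le> (\<Sum>x\<in>Rc c. \<Sum>y\<in>R. g x y)" .
    have "real (card (Rc c)) \<le> t * w c + real (card (Rc c))^2 / (4 * t * w c)"
      by (rule amgm[OF t wpos])
    also have "real (card (Rc c))^2 / (4 * t * w c) = (1/(4*t)) * (real (card (Rc c))^2 / w c)"
      by simp
    also have "\<dots> \<le> (1/(4*t)) * (\<Sum>x\<in>Rc c. \<Sum>y\<in>R. g x y)"
      using A t by (intro mult_left_mono) auto
    finally show ?thesis by simp
  qed
  have "real (card R) \<le> (\<Sum>c\<in>f`R. t * w c + (1/(4*t)) * (\<Sum>x\<in>Rc c. \<Sum>y\<in>R. g x y))"
    unfolding cardR by (rule sum_mono) (rule local)
  also have "\<dots> = t * (\<Sum>c\<in>f`R. w c) + (1/(4*t)) * (\<Sum>c\<in>f`R. \<Sum>x\<in>Rc c. \<Sum>y\<in>R. g x y)"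
    by (simp add: sum.distrib sum_distrib_left)
  also have "(\<Sum>c\<in>f`R. \<Sum>x\<in>Rc c. \<Sum>y\<in>R. g x y) = (\<Sum>x\<in>R. \<Sum>y\<in>R. g x y)"
    unfolding Rc_def by (rule sum.image_gen[OF R, symmetric])
  also have "(\<Sum>c\<in>f`R. w c) \<le> (\<Sum>c\<in>C. w c)"
    using fR Cf wpos by (intro sum_mono2) (auto intro: less_imp_le)
  finally have "real (card R) \<le> t * (\<Sum>c\<in>C. w c) + (1/(4*t)) * (\<Sum>x\<in>R. \<Sum>y\<in>R. g x y)"
    using t by (simp add: mult_left_mono)
  moreover have "(\<Sum>c\<in>C. w c) = (\<Sum>(l,j)\<in>C. 2 powr (q*(real l - real k - 1)))"
    unfolding w_def by (intro sum.cong) auto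
  ultimately show ?thesis unfolding g_def s_def by simp
qed

lemma (in prob_space) pz_lemma:
  fixes X Y :: "'a \<Rightarrow> real"
  assumes A: "A \<in> events" "A = {\<omega>\<in>space M. 1/2 \<le> X \<omega> \<and> Y \<omega> \<le> 8*K2*K3}"
    and iX: "integrable M X" and iX2: "integrable M (\<lambda>\<omega>. X \<omega>^2)" and iY: "integrable M Y"
    and X0: "\<And>\<omega>. 0 \<le> X \<omega>" and Y0: "\<And>\<omega>. 0 \<le> Y \<omega>"
    and EX: "1 \<le> expectation X" and EX2: "expectation (\<lambda>\<omega>. X \<omega>^2) \<le> K2"
    and EY: "expectation Y \<le> K3" and K2: "K2 > 0" and K3: "K3 > 0"
  shows "prob A \<ge> 1 / (8*K2)"
proof -
  define T where "T = 8*K2*K3"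
  have T: "T > 0" unfolding T_def using K2 K3 by simp
  have pw: "X \<omega> \<le> 1/2 + K2 * indicator A \<omega> + X \<omega>^2 / (4*K2) + K2 * Y \<omega> / T" if "\<omega> \<in> space M" for \<omega>
  proof -
    have am: "X \<omega> \<le> K2 * 1 + X \<omega>^2 / (4*K2*1)" by (rule amgm) (use K2 in auto)
    have Yn: "0 \<le> K2 * Y \<omega> / T" using K2 T Y0 by simp
    have q0: "0 \<le> X \<omega>^2 / (4*K2)" using K2 by simp
    show ?thesis
    proof (cases "1/2 \<le> X \<omega>")
      case False
      have "0 \<le> K2 * indicator A \<omega>" using K2 by simp
      then show ?thesis using Yn q0 False by linarith
    next
      case True
      show ?thesis
      proof (cases "\<omega> \<in> A")
        case True then show ?thesis using am Yn by simp
      next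
        case False
        then have "Y \<omega> > T" using \<open>1/2 \<le> X \<omega>\<close> that unfolding A(2) T_def by auto
        then have "K2 \<le> K2 * Y \<omega> / T" using K2 T by (simp add: field_simps)
        then show ?thesis using am False by simp
      qed
    qed
  qed
  have iA: "integrable M (indicator A :: 'a \<Rightarrow> real)"
    using A(1) emeasure_finite[of A] by (intro integrable_real_indicator) (simp_all add: less_top[symmetric])
  have "expectation X \<le> expectation (\<lambda>\<omega>. 1/2 + K2 * indicator A \<omega> + X \<omega>^2 / (4*K2) + K2 * Y \<omega> / T)"
    using pw iX iA iX2 iY by (intro integral_mono_AE) auto
  also have "\<dots> = 1/2 + K2 * prob A + expectation (\<lambda>\<omega>. X \<omega>^2) / (4*K2) + K2 * expectation Y / T"
    using iA iX2 iY A(1) by (simp add: prob_space Int_absorb2 sets.sets_into_space)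
  also have "expectation (\<lambda>\<omega>. X \<omega>^2) / (4*K2) \<le> K2 / (4*K2)"
    using EX2 K2 by (simp add: divide_right_mono)
  also have "K2 * expectation Y / T \<le> K2 * K3 / T"
    using EY K2 T by (simp add: divide_right_mono)
  finally have "1 \<le> 1/2 + K2 * prob A + K2 / (4*K2) + K2 * K3 / T" using EX by linarith
  also have "K2 / (4*K2) = 1/4" using K2 by simp
  also have "K2 * K3 / T = 1/8" unfolding T_def using K2 K3 by simp
  finally have "1/8 \<le> K2 * prob A" by simp
  then show ?thesis using K2 by (simp add: field_simps)
qed

locale perc = prob_space M for M :: "'a measure" +
  fixes U :: "nat \<times> nat \<times> ('n::finite \<Rightarrow> int) \<Rightarrow> 'a \<Rightarrow> real" and p :: real
  assumes U_meas: "\<And>i. i \<in> perc_index \<Longrightarrow> U i \<in> borel_measurable M"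
    and U_distr: "\<And>i. i \<in> perc_index \<Longrightarrow> distr M lborel (U i) = uniform_measure lborel {0<..<1}"
    and U_indep: "indep_vars (\<lambda>_. borel) U perc_index"
    and p_pos: "0 < p" and p_le: "p \<le> 1"
begin

lemma prob_less: assumes "i \<in> perc_index" shows "prob (U i -` {..<p} \<inter> space M) = p"
proof -
  have m: "U i \<in> measurable M lborel" using U_meas[OF assms] by simp
  have "prob (U i -` {..<p} \<inter> space M) = measure (distr M lborel (U i)) {..<p}"
    by (rule measure_distr[OF m, symmetric]) simp
  also have "\<dots> = measure (uniform_measure lborel {0<..<1::real}) {..<p}" using U_distr[OF assms] by simp
  also have "\<dots> = measure lborel ({0<..<1} \<inter> {..<p}) / measure lborel {0<..<1::real}"
    by (rule measure_uniform_measure) auto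
  also have "{0<..<1} \<inter> {..<p} = {0<..<p}" using p_le by auto
  finally show ?thesis using p_pos by simp
qed

definition Evs :: "(nat \<times> nat \<times> ('n \<Rightarrow> int)) set \<Rightarrow> 'a set" where
  "Evs J = {\<omega>\<in>space M. \<forall>i\<in>J. U i \<omega> < p}"

lemma Evs_sets_gen:
  assumes "finite J" "space N = space M" "\<And>i. i \<in> J \<Longrightarrow> U i \<in> borel_measurable N"
  shows "Evs J \<in> sets N"
proof -
  have "Evs J = {\<omega>\<in>space N. \<forall>i\<in>J. U i \<omega> < p}" unfolding Evs_def assms(2) ..
  also have "\<dots> \<in> sets N"
  proof (rule sets.sets_Collect_finite_All[OF _ assms(1)])
    fix i assume "i \<in> J"
    have "{\<omega>\<in>space N. U i \<omega> < p} = U i -` {..<p} \<inter> space N" by auto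
    also have "\<dots> \<in> sets N" using assms(3)[OF \<open>i \<in> J\<close>] by (rule measurable_sets) simp
    finally show "{\<omega>\<in>space N. U i \<omega> < p} \<in> sets N" .
  qed
  finally show ?thesis .
qed

lemma Evs_sets: "finite J \<Longrightarrow> J \<subseteq> perc_index \<Longrightarrow> Evs J \<in> events"
  by (rule Evs_sets_gen) (use U_meas in auto)

lemma prob_Evs: assumes "finite J" "J \<subseteq> perc_index" shows "prob (Evs J) = p ^ card J"
proof (cases "J = {}")
  case True then show ?thesis unfolding Evs_def by (simp add: prob_space)
next
  case False
  have ind: "indep_sets (\<lambda>i. {U i -` A \<inter> space M | A. A \<in> sets borel}) perc_index"
    using U_indep unfolding indep_vars_def2 by simp
  have "prob (\<Inter>j\<in>J. U j -` {..<p} \<inter> space M) = (\<Prod>j\<in>J. prob (U j -` {..<p} \<inter> space M))"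
    by (rule indep_setsD[OF ind assms(2) False assms(1)]) (auto intro!: exI[of _ "{..<p}"])
  also have "\<dots> = (\<Prod>j\<in>J. p)" using assms(2) prob_less by (intro prod.cong) auto
  also have "(\<Inter>j\<in>J. U j -` {..<p} \<inter> space M) = Evs J" unfolding Evs_def using False by auto
  finally show ?thesis by simp
qed

abbreviation Ev :: "nat \<Rightarrow> ('n \<Rightarrow> int) \<Rightarrow> 'a set" where
  "Ev k z \<equiv> Evs (Ix k z)"

lemma Ev_iff: "\<omega> \<in> Ev k z \<longleftrightarrow> \<omega> \<in> space M \<and> (\<forall>l\<le>k. U (k, l, anc l z) \<omega> < p)"
  unfolding Evs_def Ix_def by auto

lemma Ev_sets: "ivec z \<in> Vk k \<Longrightarrow> Ev k z \<in> events"
  using Evs_sets[OF Ix_finite Ix_sub_perc] .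

lemma prob_Ev: "ivec z \<in> Vk k \<Longrightarrow> prob (Ev k z) = p ^ (k+1)"
  using prob_Evs[OF Ix_finite Ix_sub_perc] Ix_card[of k z] by simp

lemma prob_Ev2: assumes "ivec x \<in> Vk k" "ivec y \<in> Vk k"
  shows "prob (Ev k x \<inter> Ev k y) = p ^ (k + 1 + Dk k x y)"
proof -
  have "Ev k x \<inter> Ev k y = Evs (Ix k x \<union> Ix k y)" unfolding Evs_def by auto
  moreover have "prob (Evs (Ix k x \<union> Ix k y)) = p ^ card (Ix k x \<union> Ix k y)"
    using assms by (intro prob_Evs) (auto simp: Ix_finite Ix_sub_perc)
  ultimately show ?thesis using Ix_Un_card[of k x y] by simp
qed

end

lemma sum_indicator_card: "finite S \<Longrightarrow> (\<Sum>y\<in>S. if P y then 1 else 0) = real (card {y\<in>S. P y})"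
  by (simp add: sum.inter_filter[symmetric])

lemma term_identity:
  fixes a p s :: real
  assumes "h \<le> n" "a > 0" "p > 0"
  shows "p^(n+2+h) * s^(n+2-h) * a^(n+h) = (a^n*p^(n+2))^2 * (s/p)^2 * (s/(a*p))^(n-h)"
proof -
  obtain j where n: "n = h + j" using assms(1) le_Suc_ex by blast
  have "n + 2 - h = j + 2" "n - h = j" using n by auto
  then show ?thesis unfolding n using assms(2,3)
    apply (simp add: power_add power_mult_distrib power_divide field_simps)
    apply (rule disjI2)
    apply algebra
    done
qed

lemma moment_bound:
  fixes e :: "'n::finite \<Rightarrow> int" and p s :: real and n :: nat
  assumes p: "0 < p" "p \<le> 1" and s: "1 \<le> s" and r: "s < 2^CARD('n) * p"
  shows "(\<Sum>x\<in>{z. anc n z = e}. \<Sum>y\<in>{z. anc n z = e}. p^(Suc n+1+Dk (Suc n) x y) * s^(Suc n+1-Dk (Suc n) x y))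
    \<le> s^2/(p^2*(1 - s/(2^CARD('n)*p))) * (real (card {z. anc n z = e}) * p^(Suc n+1))^2"
proof -
  define T where "T = {z. anc n z = e}"
  define k where "k = Suc n"
  define a :: real where "a = 2^CARD('n)"
  define f where "f = (\<lambda>h. p^(k+1+h) * s^(k+1-h))"
  define rr where "rr = s / (a*p)"
  have Tf: "finite T" unfolding T_def by (rule level_set_finite)
  have a0: "a > 0" unfolding a_def by simp
  have cT: "real (card T) = a^n" unfolding T_def a_def level_set_card by (simp add: power_mult[symmetric] mult.commute)
  have f0: "\<And>h. 0 \<le> f h" unfolding f_def using p s by simp
  have step1: "f (Dk k x y) \<le> (\<Sum>h\<le>n. f h * (if anc h x = anc h y then 1 else 0))"
    if xy: "x \<in> T" "y \<in> T" for x y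
  proof -
    have exy: "anc n x = anc n y" using xy unfolding T_def by simp
    have Dn: "Dk k x y \<le> n" by (rule Dk_le[OF exy])
    have Deq: "anc (Dk k x y) x = anc (Dk k x y) y" by (rule Dk_eq[OF exy]) (simp add: k_def)
    have "f (Dk k x y) = f (Dk k x y) * (if anc (Dk k x y) x = anc (Dk k x y) y then 1 else 0)"
      using Deq by simp
    also have "\<dots> \<le> (\<Sum>h\<le>n. f h * (if anc h x = anc h y then 1 else 0))"
      by (rule member_le_sum[where f = "\<lambda>h. f h * (if anc h x = anc h y then 1 else 0)"]) (use Dn f0 in auto)
    finally show ?thesis .
  qed
  have "(\<Sum>x\<in>T. \<Sum>y\<in>T. f (Dk k x y)) \<le> (\<Sum>x\<in>T. \<Sum>y\<in>T. \<Sum>h\<le>n. f h * (if anc h x = anc h y then 1 else 0))"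
    using step1 by (intro sum_mono) auto
  also have "\<dots> = (\<Sum>h\<le>n. f h * (\<Sum>x\<in>T. \<Sum>y\<in>T. (if anc h y = anc h x then 1 else 0)))"
    by (simp add: sum_distrib_left sum.swap[of _ "{..n}"] eq_commute)
  also have "\<dots> \<le> (\<Sum>h\<le>n. f h * (\<Sum>x\<in>T. a^h))"
  proof (intro sum_mono mult_left_mono f0)
    fix h x assume "x \<in> T"
    have "(\<Sum>y\<in>T. (if anc h y = anc h x then 1 else 0)) = real (card {y\<in>T. anc h y = anc h x})"
      by (rule sum_indicator_card[OF Tf])
    also have "card {y\<in>T. anc h y = anc h x} \<le> card {y::'n\<Rightarrow>int. anc h y = anc h x}"
      by (intro card_mono level_set_finite) auto
    also have "card {y::'n\<Rightarrow>int. anc h y = anc h x} = (2^h)^CARD('n)" by (rule level_set_card)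
    finally show "(\<Sum>y\<in>T. (if anc h y = anc h x then 1 else 0)) \<le> a^h"
      unfolding a_def by (simp add: power_mult[symmetric] mult.commute)
  qed
  also have "\<dots> = (\<Sum>h\<le>n. p^(n+2+h) * s^(n+2-h) * a^(n+h))"
    using cT by (intro sum.cong refl) (simp add: f_def k_def power_add)
  also have "\<dots> = (\<Sum>h\<le>n. (a^n*p^(n+2))^2 * (s/p)^2 * rr^(n-h))"
    unfolding rr_def using a0 p by (intro sum.cong refl term_identity) auto
  also have "\<dots> = (a^n*p^(n+2))^2 * (s/p)^2 * (\<Sum>h\<le>n. rr^(n-h))"
    by (simp add: sum_distrib_left)
  also have "(\<Sum>h\<le>n. rr^(n-h)) = (\<Sum>j\<in>(\<lambda>h. n-h)`{..n}. rr^j)"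
    by (subst sum.reindex) (auto simp: inj_on_def)
  also have "\<dots> \<le> 1/(1-rr)"
  proof -
    have "0 < rr" "rr < 1" unfolding rr_def using a0 p s r a_def by (auto simp: field_simps)
    then show ?thesis by (intro less_imp_le geometric_sum_less) auto
  qed
  finally have main: "(\<Sum>x\<in>T. \<Sum>y\<in>T. f (Dk k x y)) \<le> (a^n*p^(n+2))^2 * (s/p)^2 * (1/(1-rr))"
    by (simp add: mult_left_mono)
  have eq: "(a^n*p^(n+2))^2 * (s/p)^2 * (1/(1-rr)) = s^2/(p^2*(1 - s/(a*p))) * (real (card T) * p^(Suc n+1))^2"
    unfolding cT rr_def by (simp add: power_divide)
  have lhs: "(\<Sum>x\<in>T. \<Sum>y\<in>T. f (Dk k x y)) = (\<Sum>x\<in>T. \<Sum>y\<in>T. p^(Suc n+1+Dk (Suc n) x y) * s^(Suc n+1-Dk (Suc n) x y))"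
    unfolding f_def k_def ..
  have "(\<Sum>x\<in>T. \<Sum>y\<in>T. p^(Suc n+1+Dk (Suc n) x y) * s^(Suc n+1-Dk (Suc n) x y)) \<le> s^2/(p^2*(1 - s/(a*p))) * (real (card T) * p^(Suc n+1))^2"
    using main by (simp only: eq lhs)
  then show ?thesis unfolding T_def a_def .
qed

definition ee :: "'n::finite \<Rightarrow> int" where "ee = (\<lambda>m. if m = undefined then 1 else 0)"
definition TT :: "nat \<Rightarrow> ('n::finite \<Rightarrow> int) set" where "TT n = {z. anc n z = ee}"

lemma TT_finite: "finite (TT n)" unfolding TT_def by (rule level_set_finite)

lemma TT_card: "real (card (TT n :: ('n::finite \<Rightarrow> int) set)) = (2^n)^CARD('n)"
  unfolding TT_def level_set_card by simp

lemma TT_Sk: assumes "z \<in> TT n" shows "ivec z \<in> Sk (Suc n)" "ivec z \<in> Vk (Suc n)"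
proof -
  have d: "z i div 2^n = ee i" for i
    using assms unfolding TT_def anc_def by (simp add: fun_eq_iff)
  have zi: "ee i * 2^n \<le> z i \<and> z i < (ee i + 1) * 2^n" for i
    using int_div_iff[of "ee i" "z i" n] d[of i] by simp
  have p0: "(0::int) < 2^n" by simp
  have b: "- (2^Suc n) \<le> z i \<and> z i < 2^Suc n" for i
  proof (cases "i = undefined")
    case True
    then have "2^n \<le> z i \<and> z i < 2 * 2^n" using zi[of i] unfolding ee_def by simp
    then show ?thesis using p0 by simp
  next
    case False
    then have "0 \<le> z i \<and> z i < 2^n" using zi[of i] unfolding ee_def by simp
    then show ?thesis using p0 by simp
  qed
  show V: "ivec z \<in> Vk (Suc n)" unfolding ivec_in_Vk using b by simp
  have "2^n \<le> z undefined" using zi[of undefined] unfolding ee_def by simp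
  then have "ivec z \<notin> Vk n" unfolding ivec_in_Vk by (auto intro!: exI[of _ undefined])
  then show "ivec z \<in> Sk (Suc n)" using V unfolding Sk_def by simp
qed

lemma ivec_in_dcube0: "ivec z \<in> dcube 0 z"
  using ivec_in_dcube[of z 0 z] unfolding anc_def by simp

context perc begin

definition Xs :: "nat \<Rightarrow> 'a \<Rightarrow> real" where
  "Xs n \<omega> = (\<Sum>x\<in>TT n. indicator (Ev (Suc n) x) \<omega>) / (real (card (TT n :: ('n\<Rightarrow>int) set)) * p^(Suc n+1))"

definition Ys :: "real \<Rightarrow> nat \<Rightarrow> 'a \<Rightarrow> real" where
  "Ys s n \<omega> = (\<Sum>x\<in>TT n. \<Sum>y\<in>TT n. indicator (Ev (Suc n) x \<inter> Ev (Suc n) y) \<omega> * s^(Suc n+1-Dk (Suc n) x y))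
     / (real (card (TT n :: ('n\<Rightarrow>int) set)) * p^(Suc n+1))^2"

lemma mm_pos: "real (card (TT n :: ('n\<Rightarrow>int) set)) * p^(Suc n+1) > 0"
proof -
  have "real (card (TT n :: ('n\<Rightarrow>int) set)) = (2^n)^CARD('n)" by (rule TT_card)
  then have "real (card (TT n :: ('n\<Rightarrow>int) set)) > 0" by simp
  then show ?thesis using p_pos by simp
qed

lemma Evs_sub: "Evs J \<subseteq> space M" unfolding Evs_def by auto

lemma TT_Ev_sets: "x \<in> TT n \<Longrightarrow> Ev (Suc n) x \<in> events"
  using Ev_sets TT_Sk by blast

lemma ind_int: "A \<in> events \<Longrightarrow> integrable M (\<lambda>\<omega>. indicator A \<omega> * (c::real))"
  by (intro integrable_mult_left integrable_real_indicator) (simp_all add: less_top[symmetric])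

lemma ind_int1: "A \<in> events \<Longrightarrow> integrable M (indicator A :: 'a \<Rightarrow> real)"
  by (intro integrable_real_indicator) (simp_all add: less_top[symmetric])

lemma Xs_int: "integrable M (Xs n)"
  unfolding Xs_def
  apply (rule integrable_divide_zero)
  apply (rule Bochner_Integration.integrable_sum)
  apply (rule ind_int1[OF TT_Ev_sets])
  apply assumption
  done

lemma Ys_int: "integrable M (Ys s n)"
  unfolding Ys_def
  apply (rule integrable_divide_zero)
  apply (rule Bochner_Integration.integrable_sum)
  apply (rule Bochner_Integration.integrable_sum)
  apply (rule ind_int[OF sets.Int[OF TT_Ev_sets TT_Ev_sets]])
   apply assumption+
  done

lemma Xs_nonneg: "0 \<le> Xs n \<omega>"
  unfolding Xs_def by (intro divide_nonneg_pos sum_nonneg mm_pos) auto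

lemma Ys_nonneg: "0 \<le> s \<Longrightarrow> 0 \<le> Ys s n \<omega>"
  unfolding Ys_def by (intro divide_nonneg_pos sum_nonneg mult_nonneg_nonneg zero_less_power mm_pos) auto

lemma Xs_sq: "(Xs n \<omega>)^2 = Ys 1 n \<omega>"
  unfolding Xs_def Ys_def power_divide
  by (simp add: power2_eq_square sum_product indicator_inter_arith)

lemma EXs: "expectation (Xs n) = 1"
proof -
  define mm where "mm = real (card (TT n :: ('n\<Rightarrow>int) set)) * p^(Suc n+1)"
  have "expectation (Xs n) = expectation (\<lambda>\<omega>. \<Sum>x\<in>TT n. indicator (Ev (Suc n) x) \<omega> :: real) / mm"
    unfolding Xs_def mm_def by (rule integral_divide_zero)
  also have "expectation (\<lambda>\<omega>. \<Sum>x\<in>TT n. indicator (Ev (Suc n) x) \<omega> :: real) = (\<Sum>x\<in>TT n. expectation (indicator (Ev (Suc n) x) :: 'a \<Rightarrow> real))"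
    by (rule Bochner_Integration.integral_sum) (rule ind_int1[OF TT_Ev_sets])
  also have "\<dots> = (\<Sum>x\<in>(TT n :: ('n\<Rightarrow>int) set). p^(Suc n + 1))"
  proof (intro sum.cong refl)
    fix x :: "'n \<Rightarrow> int" assume "x \<in> TT n"
    have "expectation (indicator (Ev (Suc n) x) :: 'a \<Rightarrow> real) = prob (Ev (Suc n) x)"
      using Evs_sub by (simp add: Int_absorb2)
    also have "\<dots> = p^(Suc n + 1)" using prob_Ev TT_Sk \<open>x \<in> TT n\<close> by blast
    finally show "expectation (indicator (Ev (Suc n) x) :: 'a \<Rightarrow> real) = p^(Suc n + 1)" .
  qed
  also have "\<dots> = mm" unfolding mm_def by simp
  also have "mm / mm = 1"
  proof -
    have "mm > 0" unfolding mm_def by (rule mm_pos)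
    then show ?thesis by simp
  qed
  finally show ?thesis .
qed

lemma EYs: assumes s: "1 \<le> s" "s < 2^CARD('n) * p"
  shows "expectation (Ys s n) \<le> s^2/(p^2*(1 - s/(2^CARD('n)*p)))"
proof -
  define mm where "mm = real (card (TT n :: ('n\<Rightarrow>int) set)) * p^(Suc n+1)"
  define g where "g = (\<lambda>x y :: 'n \<Rightarrow> int. s^(Suc n+1-Dk (Suc n) x y))"
  have e1: "expectation (Ys s n) = expectation (\<lambda>\<omega>. \<Sum>x\<in>TT n. \<Sum>y\<in>TT n. indicator (Ev (Suc n) x \<inter> Ev (Suc n) y) \<omega> * g x y) / mm^2"
    unfolding Ys_def mm_def g_def by (rule integral_divide_zero)
  have "expectation (\<lambda>\<omega>. \<Sum>x\<in>TT n. \<Sum>y\<in>TT n. indicator (Ev (Suc n) x \<inter> Ev (Suc n) y) \<omega> * g x y)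
     = (\<Sum>x\<in>TT n. expectation (\<lambda>\<omega>. \<Sum>y\<in>TT n. indicator (Ev (Suc n) x \<inter> Ev (Suc n) y) \<omega> * g x y))"
    by (rule Bochner_Integration.integral_sum) (intro Bochner_Integration.integrable_sum ind_int sets.Int TT_Ev_sets)
  also have "\<dots> = (\<Sum>x\<in>TT n. \<Sum>y\<in>TT n. prob (Ev (Suc n) x \<inter> Ev (Suc n) y) * g x y)"
  proof (intro sum.cong refl)
    fix x :: "'n \<Rightarrow> int" assume x: "x \<in> TT n"
    have "expectation (\<lambda>\<omega>. \<Sum>y\<in>TT n. indicator (Ev (Suc n) x \<inter> Ev (Suc n) y) \<omega> * g x y)
      = (\<Sum>y\<in>TT n. expectation (\<lambda>\<omega>. indicator (Ev (Suc n) x \<inter> Ev (Suc n) y) \<omega> * g x y))"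
      by (rule Bochner_Integration.integral_sum) (intro ind_int sets.Int TT_Ev_sets x)
    also have "\<dots> = (\<Sum>y\<in>TT n. prob (Ev (Suc n) x \<inter> Ev (Suc n) y) * g x y)"
    proof (intro sum.cong refl)
      fix y :: "'n \<Rightarrow> int"
      have "Ev (Suc n) x \<inter> Ev (Suc n) y \<subseteq> space M" using Evs_sub by blast
      then show "expectation (\<lambda>\<omega>. indicator (Ev (Suc n) x \<inter> Ev (Suc n) y) \<omega> * g x y) = prob (Ev (Suc n) x \<inter> Ev (Suc n) y) * g x y"
        by (simp add: Int_absorb2)
    qed
    finally show "expectation (\<lambda>\<omega>. \<Sum>y\<in>TT n. indicator (Ev (Suc n) x \<inter> Ev (Suc n) y) \<omega> * g x y) = (\<Sum>y\<in>TT n. prob (Ev (Suc n) x \<inter> Ev (Suc n) y) * g x y)" .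
  qed
  also have "\<dots> = (\<Sum>x\<in>(TT n :: ('n\<Rightarrow>int) set). \<Sum>y\<in>TT n. p^(Suc n+1+Dk (Suc n) x y) * s^(Suc n+1-Dk (Suc n) x y))"
  proof (intro sum.cong refl)
    fix x y :: "'n \<Rightarrow> int" assume "x \<in> TT n" "y \<in> TT n"
    then show "prob (Ev (Suc n) x \<inter> Ev (Suc n) y) * g x y = p^(Suc n+1+Dk (Suc n) x y) * s^(Suc n+1-Dk (Suc n) x y)"
      unfolding g_def using prob_Ev2[OF TT_Sk(2) TT_Sk(2)] by simp
  qed
  also have "\<dots> \<le> s^2/(p^2*(1 - s/(2^CARD('n)*p))) * mm^2"
    unfolding mm_def TT_def by (rule moment_bound[OF p_pos p_le s])
  finally have e2: "expectation (\<lambda>\<omega>. \<Sum>x\<in>TT n. \<Sum>y\<in>TT n. indicator (Ev (Suc n) x \<inter> Ev (Suc n) y) \<omega> * g x y)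
     \<le> s^2/(p^2*(1 - s/(2^CARD('n)*p))) * mm^2" .
  have mp: "mm > 0" unfolding mm_def by (rule mm_pos)
  show ?thesis unfolding e1 using e2 mp by (simp add: divide_le_eq)
qed

end

lemma Nalpha_mono_alpha:
  assumes "0 < \<alpha>" "\<alpha> \<le> q"
  shows "min 1 (Nalpha q A k) \<le> Nalpha \<alpha> (A::(real^'n::finite) set) k"
proof (rule Nalpha_ge)
  fix C assume C: "finite C" "A \<inter> Sk k \<subseteq> (\<Union>(l, j)\<in>C. dcube l j)"
  show "min 1 (Nalpha q A k) \<le> (\<Sum>(l, j)\<in>C. 2 powr (\<alpha> * (real l - real k - 1)))"
  proof (cases "\<exists>c\<in>C. fst c > k + 1")
    case True
    then obtain c where c: "c \<in> C" "fst c > k+1" by blast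
    have "1 \<le> 2 powr (\<alpha> * (real (fst c) - real k - 1))"
      using c(2) assms(1) by (intro ge_one_powr_ge_zero) auto
    also have "\<dots> \<le> (\<Sum>(l, j)\<in>C. 2 powr (\<alpha> * (real l - real k - 1)))"
      using member_le_sum[of c C "\<lambda>c. 2 powr (\<alpha> * (real (fst c) - real k - 1))"] c C(1)
      by (simp add: case_prod_beta')
    finally show ?thesis by simp
  next
    case False
    have "Nalpha q A k \<le> (\<Sum>(l, j)\<in>C. 2 powr (q * (real l - real k - 1)))"
      by (rule Nalpha_le[OF C])
    also have "\<dots> \<le> (\<Sum>(l, j)\<in>C. 2 powr (\<alpha> * (real l - real k - 1)))"
    proof (rule sum_mono)
      fix c assume "c \<in> C"
      then have "real (fst c) - real k - 1 \<le> 0" using False by auto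
      then have "q * (real (fst c) - real k - 1) \<le> \<alpha> * (real (fst c) - real k - 1)"
        using assms by (intro mult_right_mono_neg) auto
      then show "(case c of (l, j) \<Rightarrow> 2 powr (q * (real l - real k - 1))) \<le> (case c of (l, j) \<Rightarrow> 2 powr (\<alpha> * (real l - real k - 1)))"
        by (cases c) simp
    qed
    finally show ?thesis by simp
  qed
qed

lemma sum_sum_indicator:
  assumes "finite S"
  shows "(\<Sum>x\<in>S. \<Sum>y\<in>S. indicator (E x \<inter> E y) \<omega> * g x y) = (\<Sum>x\<in>{x\<in>S. \<omega>\<in>E x}. \<Sum>y\<in>{x\<in>S. \<omega>\<in>E x}. (g x y :: real))"
proof -
  have inner: "(\<Sum>y\<in>S. indicator (E x \<inter> E y) \<omega> * g x y) = (if \<omega> \<in> E x then (\<Sum>y\<in>{x\<in>S. \<omega>\<in>E x}. g x y) else 0)" for x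
  proof (cases "\<omega> \<in> E x")
    case True
    have "(\<Sum>y\<in>{x\<in>S. \<omega>\<in>E x}. g x y) = (\<Sum>y\<in>S. if \<omega> \<in> E y then g x y else 0)"
      by (rule sum.inter_filter[OF assms])
    moreover have "(\<Sum>y\<in>S. indicator (E x \<inter> E y) \<omega> * g x y) = (\<Sum>y\<in>S. if \<omega> \<in> E y then g x y else 0)"
      using True by (intro sum.cong) (auto simp: indicator_def)
    ultimately show ?thesis using True by simp
  next
    case False then show ?thesis by (simp add: indicator_def)
  qed
  have "(\<Sum>x\<in>{x\<in>S. \<omega>\<in>E x}. \<Sum>y\<in>{x\<in>S. \<omega>\<in>E x}. (g x y :: real))
     = (\<Sum>x\<in>S. if \<omega> \<in> E x then (\<Sum>y\<in>{x\<in>S. \<omega>\<in>E x}. g x y) else 0)"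
    by (rule sum.inter_filter[OF assms])
  then show ?thesis using inner by simp
qed

lemma sum_indicator_card': "finite S \<Longrightarrow> (\<Sum>x\<in>S. indicator (E x) \<omega>) = real (card {x\<in>S. \<omega>\<in>E x})"
proof -
  assume S: "finite S"
  have "(\<Sum>x\<in>S. indicator (E x) \<omega>) = (\<Sum>x\<in>S. if \<omega> \<in> E x then 1 else (0::real))"
    by (intro sum.cong) (auto simp: indicator_def)
  also have "\<dots> = real (card {x\<in>S. \<omega>\<in>E x})" by (rule sum_indicator_card[OF S])
  finally show ?thesis .
qed

definition Kf :: "nat \<Rightarrow> real \<Rightarrow> real \<Rightarrow> real" where "Kf d p s = s^2/(p^2*(1 - s/(2^d*p)))"

context perc begin


definition Ash :: "real \<Rightarrow> nat \<Rightarrow> 'a set" where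
  "Ash q n = {\<omega>\<in>space M. 1/2 \<le> Xs n \<omega> \<and> Ys (2 powr q) n \<omega> \<le> 8 * Kf CARD('n) p 1 * Kf CARD('n) p (2 powr q)}"

lemma Kc_pos: "0 < s \<Longrightarrow> s < 2^CARD('n) * p \<Longrightarrow> Kf CARD('n) p s > 0"
  unfolding Kf_def using p_pos by (auto simp: field_simps)

lemma Kc_ge1: assumes "1 \<le> s" "s < 2^CARD('n) * p" shows "1 \<le> Kf CARD('n) p s"
proof -
  have lam: "0 < 2^CARD('n) * p" using p_pos by simp
  have r: "0 < s / (2^CARD('n) * p)" using assms lam by simp
  have r1: "s / (2^CARD('n) * p) < 1" using assms lam by simp
  have d0: "0 < p^2 * (1 - s/(2^CARD('n)*p))" using r1 p_pos by simp
  have "p^2 \<le> 1" using p_pos p_le by (simp add: power_le_one)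
  then have d1: "p^2 * (1 - s/(2^CARD('n)*p)) \<le> 1" using r r1 p_pos
    by (smt (verit, best) mult_le_one zero_le_power2)
  have "1 \<le> s^2" using assms(1) by (simp add: one_le_power)
  then show ?thesis unfolding Kf_def using d0 d1 by (simp add: le_divide_eq)
qed

lemma Ash_sets_gen:
  assumes sp: "space N = space M" and mU: "\<And>i. i \<in> perc_index \<Longrightarrow> fst i = Suc n \<Longrightarrow> U i \<in> borel_measurable N"
  shows "Ash q n \<in> sets N"
proof -
  have ev: "Ev (Suc n) x \<in> sets N" if "x \<in> TT n" for x
  proof (rule Evs_sets_gen[OF Ix_finite sp])
    fix i assume "i \<in> Ix (Suc n) x"
    then show "U i \<in> borel_measurable N" using Ix_sub_perc[OF TT_Sk(2)[OF that]] mU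
      unfolding Ix_def by auto
  qed
  have mX: "Xs n \<in> borel_measurable N"
    unfolding Xs_def using ev by (intro borel_measurable_divide borel_measurable_sum borel_measurable_indicator) auto
  have mY: "Ys s n \<in> borel_measurable N" for s
    unfolding Ys_def using ev
    by (intro borel_measurable_divide borel_measurable_sum borel_measurable_times borel_measurable_indicator
        borel_measurable_const sets.Int) auto
  have "Ash q n = {\<omega>\<in>space N. 1/2 \<le> Xs n \<omega>} \<inter> {\<omega>\<in>space N. Ys (2 powr q) n \<omega> \<le> 8 * Kf CARD('n) p 1 * Kf CARD('n) p (2 powr q)}"
    unfolding Ash_def sp by auto
  also have "\<dots> \<in> sets N" using mX mY[of "2 powr q"]
    by (intro sets.Int borel_measurable_le) auto
  finally show ?thesis .
qed

lemma Ash_prob: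
  assumes q: "0 < q" "2 powr q < 2^CARD('n) * p"
  shows "prob (Ash q n) \<ge> 1 / (8 * Kf CARD('n) p 1)"
proof (rule pz_lemma)
  have s1: "1 < 2 powr q" using q(1) by simp
  show "Ash q n \<in> events" by (rule Ash_sets_gen) (use U_meas in auto)
  show "Ash q n = {\<omega>\<in>space M. 1/2 \<le> Xs n \<omega> \<and> Ys (2 powr q) n \<omega> \<le> 8 * Kf CARD('n) p 1 * Kf CARD('n) p (2 powr q)}"
    unfolding Ash_def ..
  show "integrable M (Xs n)" by (rule Xs_int)
  show "integrable M (\<lambda>\<omega>. (Xs n \<omega>)^2)" unfolding Xs_sq by (rule Ys_int)
  show "integrable M (Ys (2 powr q) n)" by (rule Ys_int)
  show "\<And>\<omega>. 0 \<le> Xs n \<omega>" by (rule Xs_nonneg)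
  show "\<And>\<omega>. 0 \<le> Ys (2 powr q) n \<omega>" by (rule Ys_nonneg) simp
  show "1 \<le> expectation (Xs n)" using EXs by simp
  have lt1: "1 < 2^CARD('n) * p" using s1 q(2) by linarith
  show "expectation (\<lambda>\<omega>. (Xs n \<omega>)^2) \<le> Kf CARD('n) p 1" unfolding Xs_sq Kf_def
    using EYs[of 1 n] lt1 by simp
  show "expectation (Ys (2 powr q) n) \<le> Kf CARD('n) p (2 powr q)" unfolding Kf_def
    using EYs[of "2 powr q" n] q s1 by simp
  show "0 < Kf CARD('n) p 1" using lt1 by (intro Kc_pos) auto
  show "0 < Kf CARD('n) p (2 powr q)" using q by (intro Kc_pos) auto
qed

lemma Ash_Nalpha:
  assumes q: "0 < q" "2 powr q < 2^CARD('n) * p" and \<omega>: "\<omega> \<in> Ash q n"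
  shows "1 / (4 * (8 * Kf CARD('n) p 1 * Kf CARD('n) p (2 powr q))) \<le> Nalpha q (Pi_perc U p \<omega>) (Suc n)"
proof (rule Nalpha_ge)
  define T where "T = 8 * Kf CARD('n) p 1 * Kf CARD('n) p (2 powr q)"
  define k where "k = Suc n"
  define mm where "mm = real (card (TT n :: ('n\<Rightarrow>int) set)) * p^(Suc n+1)"
  define R where "R = {x\<in>TT n. \<omega> \<in> Ev k x}"
  have s1: "1 < 2 powr q" using q(1) by simp
  have lt1: "1 < 2^CARD('n) * p" using s1 q(2) by linarith
  have Tpos: "T > 0" unfolding T_def using Kc_pos[of 1] Kc_pos[of "2 powr q"] lt1 q by simp
  have mp: "mm > 0" unfolding mm_def by (rule mm_pos)
  have Rf: "finite R" unfolding R_def by (rule finite_subset[OF _ TT_finite]) auto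
  have X: "1/2 \<le> Xs n \<omega>" and Y: "Ys (2 powr q) n \<omega> \<le> T" and \<omega>sp: "\<omega> \<in> space M"
    using \<omega> unfolding Ash_def T_def by auto
  have "Xs n \<omega> * mm = (\<Sum>x\<in>TT n. indicator (Ev k x) \<omega>)"
    unfolding Xs_def mm_def[symmetric] k_def using mp by simp
  also have "\<dots> = real (card R)" unfolding R_def by (rule sum_indicator_card'[OF TT_finite])
  finally have cardR: "real (card R) = Xs n \<omega> * mm" ..
  have "Ys (2 powr q) n \<omega> * mm^2 = (\<Sum>x\<in>TT n. \<Sum>y\<in>TT n. indicator (Ev k x \<inter> Ev k y) \<omega> * (2 powr q)^(k+1 - Dk k x y))"
    unfolding Ys_def mm_def[symmetric] k_def using mp by simp
  also have "\<dots> = (\<Sum>x\<in>R. \<Sum>y\<in>R. (2 powr q)^(k+1 - Dk k x y))"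
    unfolding R_def by (rule sum_sum_indicator[OF TT_finite])
  finally have sumR: "(\<Sum>x\<in>R. \<Sum>y\<in>R. (2 powr q)^(k+1 - Dk k x y)) = Ys (2 powr q) n \<omega> * mm^2" ..
  fix C assume C: "finite C" "Pi_perc U p \<omega> \<inter> Sk (Suc n) \<subseteq> (\<Union>(l, j)\<in>C. dcube l j)"
  show "1 / (4 * T) \<le> (\<Sum>(l, j)\<in>C. 2 powr (q * (real l - real (Suc n) - 1)))"
  proof (cases "\<exists>c\<in>C. fst c > k + 1")
    case True
    then obtain c where c: "c \<in> C" "fst c > k+1" by blast
    have "1 / (4 * T) \<le> 1"
    proof -
      have "1 \<le> Kf CARD('n) p 1" "1 \<le> Kf CARD('n) p (2 powr q)"
        using Kc_ge1[of 1] Kc_ge1[of "2 powr q"] lt1 q s1 by auto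
      then have "1 \<le> T" unfolding T_def by (smt (verit) mult_le_cancel_left1 mult_mono)
      then show ?thesis by simp
    qed
    also have "1 \<le> 2 powr (q * (real (fst c) - real k - 1))"
      using c(2) q(1) by (intro ge_one_powr_ge_zero) auto
    also have "\<dots> \<le> (\<Sum>(l, j)\<in>C. 2 powr (q * (real l - real k - 1)))"
      using member_le_sum[of c C "\<lambda>c. 2 powr (q * (real (fst c) - real k - 1))"] c C(1)
      by (simp add: case_prod_beta')
    finally show ?thesis unfolding k_def .
  next
    case False
    define W where "W = (\<Sum>(l, j)\<in>C. 2 powr (q * (real l - real k - 1)))"
    have cov: "\<exists>l j. (l,j)\<in>C \<and> j = anc l x" if x: "x \<in> R" for x
    proof -
      have xT: "x \<in> TT n" and xE: "\<omega> \<in> Ev k x" using x unfolding R_def by auto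
      have "ivec x \<in> Pi_perc U p \<omega>"
        unfolding Pi_perc_alt using xE TT_Sk(1)[OF xT] ivec_in_dcube0[of x] unfolding Ev_iff k_def
        by blast
      moreover have "ivec x \<in> Sk (Suc n)" using TT_Sk(1)[OF xT] .
      ultimately have "ivec x \<in> (\<Union>(l, j)\<in>C. dcube l j)" using C(2) by blast
      then show ?thesis using ivec_in_dcube by blast
    qed
    have "real (card R) \<le> (mm * T) * W + (1/(4*(mm*T))) * (\<Sum>x\<in>R. \<Sum>y\<in>R. (2 powr q)^(k+1 - Dk k x y))"
      unfolding W_def
      by (rule cover_bound[OF Rf C(1) q(1)]) (use mp Tpos cov False in auto)
    then have "Xs n \<omega> * mm \<le> (mm * T) * W + (1/(4*(mm*T))) * (Ys (2 powr q) n \<omega> * mm^2)"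
      unfolding cardR sumR .
    also have "(1/(4*(mm*T))) * (Ys (2 powr q) n \<omega> * mm^2) = mm * (Ys (2 powr q) n \<omega> / (4*T))"
      using mp Tpos by (simp add: power2_eq_square field_simps)
    finally have "mm * Xs n \<omega> \<le> mm * (T * W + Ys (2 powr q) n \<omega> / (4*T))"
      by (simp add: algebra_simps)
    then have "Xs n \<omega> \<le> T * W + Ys (2 powr q) n \<omega> / (4*T)" using mp by simp
    moreover have "Ys (2 powr q) n \<omega> / (4*T) \<le> 1/4" using Y Tpos by (simp add: field_simps)
    ultimately have "1/4 \<le> T * W" using X by linarith
    then show ?thesis unfolding W_def k_def using Tpos by (simp add: field_simps)
  qed
qed

end

context perc begin

lemma Ash_sub: "Ash q n \<subseteq> space M" unfolding Ash_def by auto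

lemma Ash_indep: "indep_events (Ash q) UNIV"
proof -
  define I where "I = (\<lambda>j::nat. {i \<in> (perc_index :: (nat \<times> nat \<times> ('n \<Rightarrow> int)) set). fst i = Suc j})"
  define E where "E = (\<lambda>i. {U i -` A \<inter> space M | A. A \<in> sets (borel :: real measure)})"
  have ind: "indep_sets E perc_index"
    using U_indep unfolding indep_vars_def2 E_def by simp
  have ind2: "indep_sets E (\<Union>j\<in>UNIV. I j)"
    by (rule indep_sets_mono_index[OF _ ind]) (auto simp: I_def)
  have Is: "Int_stable (E i)" for i :: "nat \<times> nat \<times> ('n \<Rightarrow> int)"
    unfolding Int_stable_def E_def
  proof (safe)
    fix A B :: "real set" assume "A \<in> sets borel" "B \<in> sets borel"
    then show "\<exists>C. (U i -` A \<inter> space M) \<inter> (U i -` B \<inter> space M) = U i -` C \<inter> space M \<and> C \<in> sets borel"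
      by (intro exI[of _ "A \<inter> B"]) auto
  qed
  have dj: "disjoint_family_on I UNIV"
    unfolding disjoint_family_on_def I_def by auto
  have coll: "indep_sets (\<lambda>j. sigma_sets (space M) (\<Union>i\<in>I j. E i)) UNIV"
    by (rule indep_sets_collect_sigma[OF ind2 Is dj])
  have mem: "Ash q j \<in> sigma_sets (space M) (\<Union>i\<in>I j. E i)" for j
  proof -
    define N where "N = sigma (space M) (\<Union>i\<in>I j. E i)"
    have sub: "(\<Union>i\<in>I j. E i) \<subseteq> Pow (space M)" unfolding E_def by auto
    have sN: "sets N = sigma_sets (space M) (\<Union>i\<in>I j. E i)" unfolding N_def using sub by (rule sets_measure_of)
    have spN: "space N = space M" unfolding N_def using sub by (rule space_measure_of)
    have "Ash q j \<in> sets N"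
    proof (rule Ash_sets_gen[OF spN])
      fix i :: "nat \<times> nat \<times> ('n \<Rightarrow> int)" assume i: "i \<in> perc_index" "fst i = Suc j"
      show "U i \<in> borel_measurable N"
      proof (rule measurableI)
        fix A :: "real set" assume "A \<in> sets borel"
        then have "U i -` A \<inter> space M \<in> E i" unfolding E_def by blast
        moreover have "i \<in> I j" using i unfolding I_def by simp
        ultimately show "U i -` A \<inter> space N \<in> sets N" unfolding sN spN by blast
      qed simp
    qed
    then show ?thesis using sN by simp
  qed
  have "indep_sets (\<lambda>j. {Ash q j}) UNIV"
    by (rule indep_sets_mono_sets[OF coll]) (use mem in auto)
  then show ?thesis unfolding indep_events_def_alt .
qed

lemma Ash_AE:
  assumes q: "0 < q" "2 powr q < 2^CARD('n) * p"
  shows "AE \<omega> in M. infinite {n. \<omega> \<in> Ash q n}"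
proof -
  define c where "c = 1 / (8 * Kf CARD('n) p 1)"
  have s1: "1 < 2 powr q" using q(1) by simp
  have lt1: "1 < 2^CARD('n) * p" using s1 q(2) by linarith
  have cpos: "c > 0" unfolding c_def using Kc_pos[of 1] lt1 by simp
  have pA: "prob (Ash q n) \<ge> c" for n unfolding c_def by (rule Ash_prob[OF q])
  have evA: "Ash q n \<in> events" for n by (rule Ash_sets_gen) (use U_meas in auto)
  have eq: "{x\<in>space M. x \<in> Ash q m} = Ash q m" for m using Ash_sub by auto
  have "indep_events (\<lambda>m. {x\<in>space M. x \<in> Ash q m}) UNIV" unfolding eq by (rule Ash_indep)
  then have dis: "(AE x in M. infinite {m. x \<in> Ash q m}) \<or> (AE x in M. finite {m. x \<in> Ash q m})"
    by (rule borel_0_1_law_AE)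
  define L where "L = (\<lambda>n. \<Union>m\<in>{n..}. Ash q m)"
  have Lev: "L n \<in> events" for n unfolding L_def using evA by auto
  have Ldec: "decseq L" unfolding L_def decseq_def by (auto intro: order_trans)
  have lim: "(\<lambda>n. prob (L n)) \<longlonglongrightarrow> prob (\<Inter>n. L n)"
    by (rule finite_Lim_measure_decseq) (use Lev Ldec in auto)
  have "c \<le> prob (L n)" for n
  proof -
    have "prob (Ash q n) \<le> prob (L n)" unfolding L_def using evA Lev[unfolded L_def]
      by (intro finite_measure_mono) auto
    then show ?thesis using pA[of n] by simp
  qed
  then have pL: "c \<le> prob (\<Inter>n. L n)" by (intro LIMSEQ_le_const[OF lim]) auto
  have LIev: "(\<Inter>n. L n) \<in> events" using Lev by auto
  show ?thesis
  proof (rule disjE[OF dis])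
    assume fin: "AE x in M. finite {m. x \<in> Ash q m}"
    have "AE x in M. x \<notin> (\<Inter>n. L n)"
    proof (rule AE_mp[OF fin], rule AE_I2, safe)
      fix x assume f: "finite {m. x \<in> Ash q m}" and xL: "x \<in> (\<Inter>n. L n)"
      obtain N where "\<forall>m\<in>{m. x \<in> Ash q m}. m < N"
        using f finite_nat_bounded by blast
      moreover have "x \<in> L N" using xL by auto
      ultimately show False unfolding L_def by auto
    qed
    then have "prob (\<Inter>n. L n) = 0" using prob_eq_0[OF LIev] by simp
    then show ?thesis using pL cpos by simp
  qed
qed

end

context perc begin

definition cnt :: "nat \<Rightarrow> 'a \<Rightarrow> real" where
  "cnt k \<omega> = (\<Sum>z\<in>ibox k. indicator (Ev k z) \<omega>)"

lemma Nalpha_upper: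
  assumes \<omega>: "\<omega> \<in> space M"
  shows "Nalpha \<alpha> (Pi_perc U p \<omega>) k \<le> 2 powr (\<alpha> * (- real k - 1)) * cnt k \<omega>"
proof -
  define Z where "Z = {z\<in>ibox k. \<omega> \<in> Ev k z}"
  define C where "C = (\<lambda>z. (0::nat, z)) ` Z"
  have Zf: "finite Z" unfolding Z_def by (rule finite_subset[OF _ box_finite]) auto
  have Cf: "finite C" unfolding C_def using Zf by simp
  have cov: "Pi_perc U p \<omega> \<inter> Sk k \<subseteq> (\<Union>(l, j)\<in>C. dcube l j)"
  proof
    fix x assume x: "x \<in> Pi_perc U p \<omega> \<inter> Sk k"
    then obtain z k' where z: "x \<in> dcube 0 z" "ivec z \<in> Sk k'" "\<forall>l\<le>k'. U (k', l, anc l z) \<omega> < p"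
      unfolding Pi_perc_alt by blast
    have "ivec z \<in> Sk k" using dcube0_Sk[OF z(1)] x by simp
    then have kk: "k' = k" using Sk_disj z(2) by metis
    have "z \<in> ibox k" using \<open>ivec z \<in> Sk k\<close> Sk_sub_Vk box_iff by blast
    moreover have "\<omega> \<in> Ev k z" unfolding Ev_iff using \<omega> z(3) kk by simp
    ultimately have "(0, z) \<in> C" unfolding C_def Z_def by auto
    then show "x \<in> (\<Union>(l, j)\<in>C. dcube l j)" using z(1) by auto
  qed
  have "Nalpha \<alpha> (Pi_perc U p \<omega>) k \<le> (\<Sum>(l, j)\<in>C. 2 powr (\<alpha> * (real l - real k - 1)))"
    by (rule Nalpha_le[OF Cf cov])
  also have "\<dots> = (\<Sum>z\<in>Z. 2 powr (\<alpha> * (- real k - 1)))"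
    unfolding C_def by (subst sum.reindex) (auto simp: inj_on_def)
  also have "\<dots> = 2 powr (\<alpha> * (- real k - 1)) * real (card Z)" by simp
  also have "real (card Z) = cnt k \<omega>" unfolding cnt_def Z_def by (rule sum_indicator_card'[OF box_finite, symmetric])
  finally show ?thesis .
qed

lemma cnt_nonneg: "0 \<le> cnt k \<omega>" unfolding cnt_def by (intro sum_nonneg) auto

lemma box_Ev_sets: "z \<in> ibox k \<Longrightarrow> Ev k z \<in> events"
  using Ev_sets box_iff by blast

lemma nn_cnt: "(\<integral>\<^sup>+\<omega>. ennreal (c * cnt k \<omega>) \<partial>M) = ennreal (c * (2^(k+1))^CARD('n) * p^(k+1))"
  if c: "0 \<le> c" for c
proof -
  have "(\<integral>\<^sup>+\<omega>. ennreal (c * cnt k \<omega>) \<partial>M) = (\<integral>\<^sup>+\<omega>. (\<Sum>z\<in>ibox k. ennreal c * indicator (Ev k z) \<omega>) \<partial>M)"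
  proof (rule nn_integral_cong)
    fix \<omega>
    have "ennreal (c * cnt k \<omega>) = ennreal (\<Sum>z\<in>ibox k. c * indicator (Ev k z) \<omega>)"
      unfolding cnt_def by (simp add: sum_distrib_left)
    also have "\<dots> = (\<Sum>z\<in>ibox k. ennreal (c * indicator (Ev k z) \<omega>))"
      using c by (intro sum_ennreal[symmetric]) auto
    also have "\<dots> = (\<Sum>z\<in>ibox k. ennreal c * indicator (Ev k z) \<omega>)"
      using c by (intro sum.cong refl) (simp add: ennreal_mult' ennreal_indicator)
    finally show "ennreal (c * cnt k \<omega>) = (\<Sum>z\<in>ibox k. ennreal c * indicator (Ev k z) \<omega>)" .
  qed
  also have "\<dots> = (\<Sum>z\<in>ibox k. \<integral>\<^sup>+\<omega>. ennreal c * indicator (Ev k z) \<omega> \<partial>M)"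
    by (rule nn_integral_sum) (use box_Ev_sets in auto)
  also have "\<dots> = (\<Sum>z\<in>(ibox k :: ('n\<Rightarrow>int) set). ennreal (c * p^(k+1)))"
  proof (intro sum.cong refl)
    fix z :: "'n \<Rightarrow> int" assume z: "z \<in> ibox k"
    have "(\<integral>\<^sup>+\<omega>. ennreal c * indicator (Ev k z) \<omega> \<partial>M) = ennreal c * emeasure M (Ev k z)"
      by (rule nn_integral_cmult_indicator[OF box_Ev_sets[OF z]])
    also have "emeasure M (Ev k z) = ennreal (p^(k+1))"
      using prob_Ev[of z k] z box_iff[of z k] by (simp add: emeasure_eq_measure)
    finally show "(\<integral>\<^sup>+\<omega>. ennreal c * indicator (Ev k z) \<omega> \<partial>M) = ennreal (c * p^(k+1))"
      using c p_pos by (simp add: ennreal_mult)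
  qed
  also have "\<dots> = ennreal (\<Sum>z\<in>(ibox k :: ('n\<Rightarrow>int) set). c * p^(k+1))"
    using c p_pos by (intro sum_ennreal) simp
  also have "(\<Sum>z\<in>(ibox k :: ('n\<Rightarrow>int) set). c * p^(k+1)) = c * (2^(k+1))^CARD('n) * p^(k+1)"
    using box_card[of k, where 'n='n] by simp
  finally show ?thesis .
qed

lemma upper_AE:
  assumes a: "0 < \<alpha>" "2^CARD('n) * p < 2 powr \<alpha>"
  shows "AE \<omega> in M. summable (\<lambda>k. Nalpha \<alpha> (Pi_perc U p \<omega>) (Suc k))"
proof -
  define r where "r = 2^CARD('n) * p / 2 powr \<alpha>"
  define c where "c = (\<lambda>k::nat. 2 powr (\<alpha> * (- real (Suc k) - 1)))"
  define a where "a = (\<lambda>k \<omega>. c k * cnt (Suc k) \<omega>)"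
  have r0: "0 < r" "r < 1" unfolding r_def using a p_pos by auto
  have c0: "0 \<le> c k" for k unfolding c_def by simp
  have a0: "0 \<le> a k \<omega>" for k \<omega> unfolding a_def using c0 cnt_nonneg by simp
  have ck: "c k * (2^(Suc k+1))^CARD('n) * p^(Suc k+1) = r^(k+2)" for k
  proof -
    have e: "\<alpha> * (- real (Suc k) - 1) = - (\<alpha> * real (k+2))" by (simp add: algebra_simps)
    have "c k = inverse (2 powr (\<alpha> * real (k+2)))" unfolding c_def e by (rule powr_minus)
    also have "2 powr (\<alpha> * real (k+2)) = (2 powr \<alpha>) powr real (k+2)" by (simp add: powr_powr)
    also have "\<dots> = (2 powr \<alpha>)^(k+2)" by (rule powr_realpow) simp
    finally have e1: "c k = inverse ((2 powr \<alpha>)^(k+2))" .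
    have e2: "((2::real)^(Suc k+1))^CARD('n) = (2^CARD('n))^(k+2)"
    proof -
      have "Suc k + 1 = k + 2" by simp
      then show ?thesis by (metis power_mult mult.commute)
    qed
    have e3: "(2^CARD('n) * p / 2 powr \<alpha>)^(k+2) = ((2::real)^CARD('n))^(k+2) * p^(k+2) / (2 powr \<alpha>)^(k+2)"
      by (simp add: power_divide power_mult_distrib)
    have e4: "p^(Suc k+1) = p^(k+2)" by simp
    show ?thesis unfolding r_def e1 e2 e3 e4 by (simp add: divide_inverse ac_simps)
  qed
  have meas: "(\<lambda>\<omega>. ennreal (a k \<omega>)) \<in> borel_measurable M" for k
    unfolding a_def cnt_def using box_Ev_sets
    by (intro measurable_compose[OF _ measurable_ennreal] borel_measurable_times borel_measurable_const
        borel_measurable_sum borel_measurable_indicator) auto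
  have "(\<integral>\<^sup>+\<omega>. (\<Sum>k. ennreal (a k \<omega>)) \<partial>M) = (\<Sum>k. \<integral>\<^sup>+\<omega>. ennreal (a k \<omega>) \<partial>M)"
    by (rule nn_integral_suminf[OF meas])
  also have "\<dots> = (\<Sum>k. ennreal (r^(k+2)))"
    unfolding a_def by (subst nn_cnt[OF c0]) (simp only: ck)
  also have "\<dots> \<noteq> \<infinity>"
  proof -
    have "summable (\<lambda>k. r^k)" using r0 by (intro summable_geometric) simp
    then have "summable (\<lambda>k. r^(k+2))" by (rule summable_ignore_initial_segment)
    then have "(\<Sum>k. ennreal (r^(k+2))) \<noteq> top" using r0 by (intro ennreal_suminf_neq_top) auto
    then show ?thesis by simp
  qed
  finally have fin: "(\<integral>\<^sup>+\<omega>. (\<Sum>k. ennreal (a k \<omega>)) \<partial>M) \<noteq> \<infinity>" .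
  have "AE \<omega> in M. (\<Sum>k. ennreal (a k \<omega>)) \<noteq> \<infinity>"
    by (rule nn_integral_PInf_AE[OF _ fin]) (use meas in auto)
  then show ?thesis
  proof (rule AE_mp[OF _ AE_I2], intro impI)
    fix \<omega> assume \<omega>: "\<omega> \<in> space M" and f: "(\<Sum>k. ennreal (a k \<omega>)) \<noteq> \<infinity>"
    have f': "(\<Sum>k. ennreal (a k \<omega>)) \<noteq> top" using f by simp
    have sa: "summable (\<lambda>k. a k \<omega>)" by (rule summable_suminf_not_top[OF a0 f'])
    show "summable (\<lambda>k. Nalpha \<alpha> (Pi_perc U p \<omega>) (Suc k))"
    proof (rule summable_comparison_test'[OF sa])
      fix k
      show "norm (Nalpha \<alpha> (Pi_perc U p \<omega>) (Suc k)) \<le> a k \<omega>"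
        using Nalpha_upper[OF \<omega>, of \<alpha> "Suc k"] Nalpha_nonneg[of \<alpha> "Pi_perc U p \<omega>" "Suc k"]
        unfolding a_def c_def by simp
    qed
  qed
qed

end

lemma le_eps: assumes "\<And>m::nat. x \<le> (y::real) + 1 / (real m + 1)" shows "x \<le> y"
proof (rule ccontr)
  assume "\<not> x \<le> y"
  then have "0 < x - y" by simp
  then obtain n :: nat where n: "n > 0" "inverse (real n) < x - y" using ex_inverse_of_nat_less by blast
  have "1 / (real n + 1) \<le> inverse (real n)" using n(1) by (simp add: field_simps)
  then show False using assms[of n] n(2) by linarith
qed

context perc begin

lemma main: "AE \<omega> in M. DimH (Pi_perc U p \<omega>) = max 0 (real CARD('n) + log 2 p)"
proof -
  define \<beta> where "\<beta> = real CARD('n) + log 2 p"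
  define \<theta> where "\<theta> = max 0 \<beta>"
  define al where "al = (\<lambda>m::nat. \<theta> + 1 / (real m + 1))"
  define qq where "qq = (\<lambda>m::nat. \<theta> * (real m + 1) / (real m + 2))"
  have pw: "2 powr \<beta> = 2^CARD('n) * p"
    unfolding \<beta>_def using p_pos by (simp add: powr_add powr_realpow)
  have th0: "0 \<le> \<theta>" unfolding \<theta>_def by simp
  have al_pos: "0 < al m" for m unfolding al_def using th0 by (simp add: add_nonneg_pos)
  have al_gt: "2^CARD('n) * p < 2 powr (al m)" for m
  proof -
    have "0 < 1 / (real m + 1)" by simp
    moreover have "\<beta> \<le> max 0 \<beta>" by simp
    ultimately have "\<beta> < al m" unfolding al_def \<theta>_def by linarith
    then show ?thesis unfolding pw[symmetric] by (rule powr_less_mono) simp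
  qed
  have up: "AE \<omega> in M. summable (\<lambda>k. Nalpha (al m) (Pi_perc U p \<omega>) (Suc k))" for m
    by (rule upper_AE[OF al_pos al_gt])
  have qq_pos: "0 < \<theta> \<Longrightarrow> 0 < qq m" for m unfolding qq_def by simp
  have qq_lt: "0 < \<theta> \<Longrightarrow> 2 powr (qq m) < 2^CARD('n) * p" for m
  proof -
    assume t: "0 < \<theta>"
    then have "\<theta> = \<beta>" unfolding \<theta>_def by simp
    have "qq m < \<theta>" unfolding qq_def using t by (simp add: field_simps)
    then have "qq m < \<beta>" using \<open>\<theta> = \<beta>\<close> by simp
    then show ?thesis unfolding pw[symmetric] by (rule powr_less_mono) simp
  qed
  have lo: "AE \<omega> in M. 0 < \<theta> \<longrightarrow> infinite {n. \<omega> \<in> Ash (qq m) n}" for m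
  proof (cases "0 < \<theta>")
    case True
    show ?thesis using Ash_AE[OF qq_pos[OF True, of m] qq_lt[OF True, of m]] by eventually_elim simp
  next
    case False then show ?thesis by simp
  qed
  have AEall: "AE \<omega> in M. (\<forall>m. summable (\<lambda>k. Nalpha (al m) (Pi_perc U p \<omega>) (Suc k))) \<and>
      (\<forall>m. 0 < \<theta> \<longrightarrow> infinite {n. \<omega> \<in> Ash (qq m) n})"
    using up lo by (simp add: AE_all_countable)
  show ?thesis unfolding \<beta>_def[symmetric] \<theta>_def[symmetric]
  proof (rule AE_mp[OF AEall AE_I2], intro impI)
    fix \<omega> assume H: "(\<forall>m. summable (\<lambda>k. Nalpha (al m) (Pi_perc U p \<omega>) (Suc k))) \<and>
      (\<forall>m. 0 < \<theta> \<longrightarrow> infinite {n. \<omega> \<in> Ash (qq m) n})"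
    define A where "A = Pi_perc U p \<omega>"
    define S where "S = {\<alpha>. \<alpha> > 0 \<and> summable (\<lambda>k. Nalpha \<alpha> A (Suc k))}"
    have alS: "al m \<in> S" for m unfolding S_def A_def using H al_pos by simp
    have lowS: "\<theta> \<le> \<alpha>" if a: "\<alpha> \<in> S" for \<alpha>
    proof (rule ccontr)
      assume "\<not> \<theta> \<le> \<alpha>"
      then have lt: "\<alpha> < \<theta>" by simp
      have a0: "0 < \<alpha>" and sa: "summable (\<lambda>k. Nalpha \<alpha> A (Suc k))" using a unfolding S_def by auto
      have t0: "0 < \<theta>" using lt a0 by simp
      obtain m :: nat where m: "m > 0" "inverse (real m) < (\<theta> - \<alpha>) / \<theta>"
        using ex_inverse_of_nat_less[of "(\<theta> - \<alpha>) / \<theta>"] lt t0 by auto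
      have "\<theta> / (real m + 2) \<le> \<theta> / real m" using t0 m(1) by (intro divide_left_mono) auto
      also have "\<theta> / real m < \<theta> - \<alpha>" using m(2) t0 by (simp add: field_simps)
      finally have "\<alpha> \<le> \<theta> - \<theta> / (real m + 2)" by simp
      also have "\<theta> - \<theta> / (real m + 2) = qq m" unfolding qq_def by (simp add: field_simps)
      finally have aq: "\<alpha> \<le> qq m" .
      define cm where "cm = 1 / (4 * (8 * Kf CARD('n) p 1 * Kf CARD('n) p (2 powr (qq m))))"
      have lt1: "1 < 2^CARD('n) * p"
      proof -
        have "1 < 2 powr (qq m)" using qq_pos[OF t0] by simp
        then show ?thesis using qq_lt[OF t0, of m] by linarith
      qed
      have cm0: "0 < cm" unfolding cm_def
        using Kc_pos[of 1] Kc_pos[of "2 powr qq m"] lt1 qq_lt[OF t0, of m] by simp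
      define \<epsilon> where "\<epsilon> = min 1 cm"
      have e0: "0 < \<epsilon>" unfolding \<epsilon>_def using cm0 by simp
      have big: "\<epsilon> \<le> Nalpha \<alpha> A (Suc n)" if n: "\<omega> \<in> Ash (qq m) n" for n
      proof -
        have "cm \<le> Nalpha (qq m) A (Suc n)" unfolding cm_def A_def
          by (rule Ash_Nalpha[OF qq_pos[OF t0] qq_lt[OF t0] n])
        then have "\<epsilon> \<le> min 1 (Nalpha (qq m) A (Suc n))" unfolding \<epsilon>_def by simp
        also have "\<dots> \<le> Nalpha \<alpha> A (Suc n)" by (rule Nalpha_mono_alpha[OF a0 aq])
        finally show ?thesis .
      qed
      have "(\<lambda>k. Nalpha \<alpha> A (Suc k)) \<longlonglongrightarrow> 0" by (rule summable_LIMSEQ_zero[OF sa])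
      then have "eventually (\<lambda>k. Nalpha \<alpha> A (Suc k) < \<epsilon>) sequentially"
        using e0 by (rule order_tendstoD)
      then obtain N where N: "\<And>k. k \<ge> N \<Longrightarrow> Nalpha \<alpha> A (Suc k) < \<epsilon>"
        unfolding eventually_sequentially by blast
      have "infinite {n. \<omega> \<in> Ash (qq m) n}" using H t0 by blast
      then obtain n where "n \<ge> N" "\<omega> \<in> Ash (qq m) n"
        unfolding infinite_nat_iff_unbounded_le by blast
      then show False using N big by force
    qed
    have ne: "S \<noteq> {}" using alS by blast
    have bdd: "bdd_below S" using lowS by (intro bdd_belowI) 
    have "\<theta> \<le> Inf S" by (rule cInf_greatest[OF ne]) (rule lowS)
    moreover have "Inf S \<le> \<theta>"
    proof (rule le_eps)
      fix m show "Inf S \<le> \<theta> + 1 / (real m + 1)" using cInf_lower[OF alS bdd] unfolding al_def .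
    qed
    ultimately have "Inf S = \<theta>" by simp
    then show "DimH (Pi_perc U p \<omega>) = \<theta>" unfolding DimH_def S_def A_def .
  qed
qed

end

theorem corollary3p7:
  fixes M :: "'a measure"
    and U :: "nat \<times> nat \<times> ('n::finite \<Rightarrow> int) \<Rightarrow> 'a \<Rightarrow> real"
    and p :: real
  assumes "prob_space M"
    and "\<And>i. i \<in> perc_index \<Longrightarrow> U i \<in> borel_measurable M"
    and "\<And>i. i \<in> perc_index \<Longrightarrow> distr M lborel (U i) = uniform_measure lborel {0<..<1}"
    and "prob_space.indep_vars M (\<lambda>_. borel) U perc_index"
    and "0 < p" and "p \<le> 1"
  shows "AE \<omega> in M. DimH (Pi_perc U p \<omega>) = max 0 (real CARD('n) + log 2 p)"
proof -
  interpret perc M U p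
    using assms by (intro perc.intro perc_axioms.intro) auto
  show ?thesis by (rule main)
qed

end
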